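(* Let $a\ge2$ and $0\le\mu\le a-1$ be integers. Let $F(n,t)=\dfrac{n!^a}{\Gamma^{a-1}(t+1)\Gamma^a(n-t+1)}$, $F_{n,\mu}=\sum_{k=0}^n\bigl(\frac d{dt}\bigr)^\mu F(n,t)\big|_{t=k}$, and for $u\in\mathbb R$, $j\ge0$, $$\widetilde I_{n,j}(u)=\sum_{k=0}^n\operatorname{res}_{t=k}\Bigl(F(n,t)\Bigl(\frac{\pi}{\sin\pi t}\Bigr)^{j+1}e^{i\pi tu}\Bigr).$$ Then there are real constants $c_{j,\mu}$, $0\le j\le\mu$, independent of $n$, with $c_{\mu,\mu}\ne0$, such that for all $n\ge0$: $F_{n,\mu}=\widetilde I_{n,0}(1)$ if $\mu=0$; $F_{n,\mu}=\sum_{j=0}^{[\mu/2]}c_{2j+1,\mu}\widetilde I_{n,2j+1}(0)$ if $\mu$ is odd; $F_{n,\mu}=\sum_{j=1}^{\mu/2}c_{2j,\mu}\operatorname{Re}\widetilde I_{n,2j}(1)$ if $\mu\ge2$ is even. *)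

theory Defs
  imports "HOL-Complex_Analysis.Complex_Analysis"
begin

text \<open>F(n,t) = n!^a / (Gamma(t+1)^(a-1) Gamma(n-t+1)^a), written with the entire
  reciprocal Gamma function rGamma = 1/Gamma; generic over real and complex t.\<close>
definition FF :: "nat \<Rightarrow> nat \<Rightarrow> 'a::Gamma \<Rightarrow> 'a" where
  "FF a n t = (of_nat (fact n))^a * (rGamma (t + 1))^(a - 1) * (rGamma (of_nat n - t + 1))^a"

definition Fnmu :: "nat \<Rightarrow> nat \<Rightarrow> nat \<Rightarrow> real" where
  "Fnmu a n \<mu> = (\<Sum>k=0..n. (deriv ^^ \<mu>) (\<lambda>t::real. FF a n t) (real k))"

definition Itilde :: "nat \<Rightarrow> nat \<Rightarrow> nat \<Rightarrow> real \<Rightarrow> complex" where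
  "Itilde a n j u = (\<Sum>k=0..n. residue
     (\<lambda>t::complex. FF a n t * (complex_of_real pi / sin (complex_of_real pi * t))^(j+1)
        * exp (\<i> * complex_of_real pi * t * complex_of_real u)) (of_nat k))"

end

theory Submission
  imports Defs
begin

definition g0 :: "complex \<Rightarrow> complex" where
  "g0 s = (if s = 0 then of_real pi else sin (of_real pi * s) / s)"
definition PP :: "complex \<Rightarrow> complex" where
  "PP s = of_real pi / g0 s"

lemma g0_holo: "g0 holomorphic_on UNIV"
proof -
  have eq: "deriv (\<lambda>z::complex. sin (of_real pi * z)) 0 = of_real pi"
    by (rule DERIV_imp_deriv) (auto intro!: derivative_eq_intros)
  have "(\<lambda>z. if z = 0 then deriv (\<lambda>z::complex. sin (of_real pi * z)) 0
                else ((\<lambda>z. sin (of_real pi * z)) z - (\<lambda>z. sin (of_real pi * z)) 0) / (z-0)) holomorphic_on UNIV"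
    by (rule pole_lemma) (auto intro!: holomorphic_intros)
  then have "(\<lambda>z. if z = 0 then of_real pi
                else ((\<lambda>z. sin (of_real pi * z)) z - (\<lambda>z. sin (of_real pi * z)) 0) / (z-0)) holomorphic_on UNIV"
    unfolding eq .
  moreover have "g0 = (\<lambda>z. if z = 0 then of_real pi
                else ((\<lambda>z. sin (of_real pi * z)) z - (\<lambda>z. sin (of_real pi * z)) 0) / (z-0))"
    by (auto simp: g0_def fun_eq_iff)
  ultimately show ?thesis by simp
qed

lemma sin_pi_nz: assumes "s \<in> ball 0 1" "s \<noteq> 0" shows "sin (complex_of_real pi * s) \<noteq> 0"
proof
  assume "sin (complex_of_real pi * s) = 0"
  then obtain n::int where n: "complex_of_real pi * s = of_real (n * pi)" by (auto simp: sin_eq_0)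
  then have "s = of_int n" by (simp add: field_simps)
  with assms have "norm (of_int n :: complex) < 1" "n \<noteq> 0" by auto
  then show False by (simp add: norm_of_int) 
qed

lemma g0_nz: "s \<in> ball 0 1 \<Longrightarrow> g0 s \<noteq> 0"
  using sin_pi_nz[of s] by (auto simp: g0_def)

lemma PP_holo: "PP holomorphic_on ball 0 1"
  unfolding PP_def using g0_nz
  by (intro holomorphic_intros holomorphic_on_subset[OF g0_holo]) auto

lemma PP_0: "PP 0 = 1" by (simp add: PP_def g0_def)

lemma PP_eq: "s \<noteq> 0 \<Longrightarrow> PP s = of_real pi * s / sin (of_real pi * s)"
  by (simp add: PP_def g0_def)

lemma PP_even: "PP (-s) = PP s"
  by (simp add: PP_def g0_def)

lemma PP_cnj: "cnj (PP (cnj s)) = PP s"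
  by (simp add: PP_def g0_def cnj_sin)

lemma even_hderiv:
  assumes "H holomorphic_on ball 0 1" "\<And>s. s \<in> ball 0 1 \<Longrightarrow> H (-s) = H s" "odd m"
  shows "(deriv ^^ m) H 0 = 0"
proof -
  have "(deriv ^^ m) (\<lambda>w. H (-1 * w)) 0 = (-1)^m * (deriv ^^ m) H (-1 * 0)"
    by (rule higher_deriv_compose_linear[OF assms(1), where S="ball 0 1"]) auto
  moreover have "(deriv ^^ m) (\<lambda>w. H (-1 * w)) 0 = (deriv ^^ m) H 0"
  proof (rule higher_deriv_transform_within_open[of _ "ball 0 1"])
    show "(\<lambda>w. H (-1 * w)) holomorphic_on ball 0 1"
    proof -
      have h1: "(\<lambda>w::complex. -w) holomorphic_on ball 0 1" by (auto intro!: holomorphic_intros)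
      have h2: "uminus ` ball (0::complex) 1 \<subseteq> ball 0 1" by auto
      show ?thesis
      using holomorphic_on_compose_gen[of "\<lambda>w. -1*w" "ball 0 1" H "ball 0 1"] assms(1) h1 h2
      by (auto simp: o_def)
    qed
  qed (use assms in auto)
  ultimately show ?thesis using assms(3) by simp
qed

lemma cnj_hderiv:
  assumes hol: "H holomorphic_on ball 0 r" and sym: "\<And>s. s \<in> ball 0 r \<Longrightarrow> cnj (H (cnj s)) = H s"
  shows "z \<in> ball 0 r \<Longrightarrow> (deriv ^^ m) H (cnj z) = cnj ((deriv ^^ m) H z)"
proof (induction m arbitrary: z)
  case 0
  then show ?case using sym[of z] by (metis complex_cnj_cnj funpow_0)
next
  case (Suc m)
  define G where "G = (deriv ^^ m) H"
  have holG: "G holomorphic_on ball 0 r" unfolding G_def by (rule holomorphic_higher_deriv[OF hol]) auto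
  have cz: "cnj z \<in> ball 0 r" using Suc.prems by auto
  define D where "D = deriv G (cnj z)"
  have "(G has_field_derivative D) (at (cnj z))" unfolding D_def
    by (rule holomorphic_derivI[OF holG]) (use cz in auto)
  then have "((cnj \<circ> G \<circ> cnj) has_field_derivative cnj D) (at (cnj (cnj z)))"
    by (intro has_field_derivative_cnj_cnj) simp
  then have d1: "((cnj \<circ> G \<circ> cnj) has_field_derivative cnj D) (at z)" by simp
  have "(G has_field_derivative cnj D) (at z)"
  proof (rule has_field_derivative_transform_within_open[OF d1, of "ball 0 r"])
    fix w :: complex assume w: "w \<in> ball 0 r"
    show "(cnj \<circ> G \<circ> cnj) w = G w" using Suc.IH[OF w] by (simp add: G_def)
  qed (use Suc.prems in auto)
  then have "deriv G z = cnj D" by (rule DERIV_imp_deriv)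
  then show ?case by (simp add: G_def D_def)
qed

lemma real_hderiv0:
  assumes "H holomorphic_on ball 0 1" "\<And>s. s \<in> ball 0 1 \<Longrightarrow> cnj (H (cnj s)) = H s"
  shows "(deriv ^^ m) H 0 = of_real (Re ((deriv ^^ m) H 0))"
proof -
  have "(deriv ^^ m) H (cnj 0) = cnj ((deriv ^^ m) H 0)" by (rule cnj_hderiv[OF assms]) auto
  then have "Im ((deriv ^^ m) H 0) = 0" by (metis complex_cnj_zero Reals_cnj_iff complex_is_Real_iff)
  then show ?thesis by (simp add: complex_eqI)
qed

lemma sin_shift: "sin (complex_of_real pi * (of_nat k + x)) = (-1)^k * sin (of_real pi * x)"
proof -
  have "complex_of_real pi * (of_nat k + x) = of_real pi * x + of_real (real k * pi)" by (simp add: algebra_simps)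
  then show ?thesis by (simp add: sin_add sin_of_real cos_of_real)
qed

lemma exp_shift: "exp (\<i> * complex_of_real pi * (of_nat k + x)) = (-1)^k * exp (\<i> * of_real pi * x)"
proof -
  have "exp (\<i> * complex_of_real pi * (of_nat k + x)) = exp (of_nat k * (\<i> * of_real pi)) * exp (\<i> * of_real pi * x)"
    by (simp add: algebra_simps flip: exp_add)
  also have "exp (of_nat k * (\<i> * complex_of_real pi)) = (-1)^k" by (simp add: exp_of_nat_mult)
  finally show ?thesis .
qed

lemma res_formula:
  fixes F E :: "complex \<Rightarrow> complex"
  assumes holF: "F holomorphic_on UNIV" and holE: "E holomorphic_on UNIV"
    and Esh: "\<And>x. E (of_nat k + x) = ((-1)^k)^(j+1) * E x"
  shows "residue (\<lambda>t. F t * (of_real pi / sin (of_real pi * t))^(j+1) * E t) (of_nat k) =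
     (\<Sum>i=0..j. (deriv ^^ i) F (of_nat k) * (deriv ^^ (j-i)) (\<lambda>s. PP s^(j+1) * E s) 0 / (fact i * fact (j-i)))"
proof -
  define W where "W = (\<lambda>s. PP s^(j+1) * E s)"
  have holW: "W holomorphic_on ball 0 1" unfolding W_def
    by (intro holomorphic_intros PP_holo holomorphic_on_subset[OF holE]) auto
  have holFk: "(\<lambda>x. F (of_nat k + x)) holomorphic_on ball 0 1"
    by (intro holomorphic_on_compose_gen[OF _ holF, unfolded o_def] holomorphic_intros) auto
  have "residue (\<lambda>t. F t * (of_real pi / sin (of_real pi * t))^(j+1) * E t) (of_nat k) =
        residue (\<lambda>x. F (of_nat k + x) * (of_real pi / sin (of_real pi * (of_nat k + x)))^(j+1) * E (of_nat k + x)) 0"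
    by (rule residue_shift_0)
  also have "\<dots> = residue (\<lambda>x. (F (of_nat k + x) * W x) / x ^ Suc j) 0"
  proof (rule residue_cong)
    have "\<forall>\<^sub>F x in at 0. x \<in> ball (0::complex) 1 - {0}"
      by (intro eventually_at_in_open) auto
    then show "\<forall>\<^sub>F x in at 0. F (of_nat k + x) * (of_real pi / sin (of_real pi * (of_nat k + x)))^(j+1) * E (of_nat k + x)
       = (F (of_nat k + x) * W x) / x ^ Suc j"
    proof (rule eventually_mono)
      fix x assume x: "x \<in> ball (0::complex) 1 - {0}"
      then have sx: "sin (of_real pi * x) \<noteq> 0" using sin_pi_nz by auto
      have x0: "x \<noteq> 0" using x by auto
      have s: "((-1::complex)^k)^(j+1) * ((-1)^k)^(j+1) = 1"
      proof -
        have "((-1::complex)^k)^(j+1) * ((-1)^k)^(j+1) = (-1)^(k*(j+1) + k*(j+1))"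
          by (simp only: power_add power_mult)
        also have "k*(j+1) + k*(j+1) = 2*(k*(j+1))" by simp
        also have "(-1::complex)^(2*(k*(j+1))) = 1" by (simp only: power_mult) simp
        finally show ?thesis .
      qed
      define \<sigma> where "\<sigma> = ((-1::complex)^k)^(j+1)"
      have e2: "of_real pi / sin (of_real pi * (of_nat k + x)) = (-1)^k * (PP x / x)"
      proof (cases "even k")
        case True then show ?thesis using sx x0 by (simp add: sin_shift PP_eq)
      next
        case False then show ?thesis using sx x0 by (simp add: sin_shift PP_eq)
      qed
      have "F (of_nat k + x) * (of_real pi / sin (of_real pi * (of_nat k + x)))^(j+1) * E (of_nat k + x)
          = F (of_nat k + x) * (\<sigma> * (PP x / x)^(j+1)) * (\<sigma> * E x)"
        unfolding e2 Esh \<sigma>_def by (simp only: power_mult_distrib)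
      also have "\<dots> = F (of_nat k + x) * (\<sigma> * \<sigma>) * ((PP x / x)^(j+1) * E x)"
        by (simp only: mult_ac)
      also have "\<dots> = (F (of_nat k + x) * W x) / x ^ Suc j"
        using s unfolding \<sigma>_def W_def by (simp add: power_divide)
      finally show "F (of_nat k + x) * (of_real pi / sin (of_real pi * (of_nat k + x)))^(j+1) * E (of_nat k + x)
       = (F (of_nat k + x) * W x) / x ^ Suc j" .
    qed
  qed simp
  also have "\<dots> = (deriv ^^ j) (\<lambda>x. F (of_nat k + x) * W x) 0 / fact j"
    by (rule residue_holomorphic_over_power'[of "ball 0 1"]) (auto intro!: holomorphic_intros holW holFk)
  also have "(deriv ^^ j) (\<lambda>x. F (of_nat k + x) * W x) 0 =
      (\<Sum>i = 0..j. of_nat (j choose i) * (deriv ^^ i) (\<lambda>x. F (of_nat k + x)) 0 * (deriv ^^ (j-i)) W 0)"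
    by (rule higher_deriv_mult[OF holFk holW]) auto
  also have "\<dots> = (\<Sum>i = 0..j. of_nat (j choose i) * (deriv ^^ i) F (of_nat k) * (deriv ^^ (j-i)) W 0)"
  proof (rule sum.cong[OF refl])
    fix i
    have "(deriv ^^ i) (\<lambda>x. F (1 * x + of_nat k)) 0 = 1^i * (deriv ^^ i) F (1 * 0 + of_nat k)"
      by (rule higher_deriv_compose_linear'[OF holF, where S=UNIV]) auto
    then show "of_nat (j choose i) * (deriv ^^ i) (\<lambda>x. F (of_nat k + x)) 0 * (deriv ^^ (j-i)) W 0 =
       of_nat (j choose i) * (deriv ^^ i) F (of_nat k) * (deriv ^^ (j-i)) W 0"
      by (simp add: add.commute)
  qed
  finally show ?thesis
    unfolding W_def sum_divide_distrib
  proof (elim ssubst, intro sum.cong refl)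
    fix i assume i: "i \<in> {0..j}"
    have "of_nat (j choose i) = (fact j / (fact i * fact (j-i)) :: complex)"
      using i by (simp add: binomial_fact)
    then show "of_nat (j choose i) * (deriv ^^ i) F (of_nat k) * (deriv ^^ (j - i)) (\<lambda>s. PP s ^ (j + 1) * E s) 0 / fact j =
         (deriv ^^ i) F (of_nat k) * (deriv ^^ (j - i)) (\<lambda>s. PP s ^ (j + 1) * E s) 0 / (fact i * fact (j - i))"
      by simp
  qed
qed

lemma sum_odd_part:
  fixes f :: "nat \<Rightarrow> 'a::comm_monoid_add"
  shows "(\<And>i. even i \<Longrightarrow> i \<le> 2*m+1 \<Longrightarrow> f i = 0) \<Longrightarrow> (\<Sum>i=0..2*m+1. f i) = (\<Sum>i=0..m. f (2*i+1))"
proof (induction m)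
  case 0 then show ?case using 0(1)[of 0] by (simp add: sum.atLeast0_atMost_Suc)
next
  case (Suc m)
  have "2 * Suc m + 1 = Suc (Suc (2*m+1))" by simp
  then show ?case using Suc.IH Suc.prems Suc.prems[of "2*m+2"] by (simp add: sum.atLeast0_atMost_Suc)
qed

lemma sum_even_part:
  fixes f :: "nat \<Rightarrow> 'a::comm_monoid_add"
  assumes "f 0 = 0"
  shows "(\<And>i. odd i \<Longrightarrow> i \<le> 2*m \<Longrightarrow> f i = 0) \<Longrightarrow> (\<Sum>i=0..2*m. f i) = (\<Sum>i=1..m. f (2*i))"
proof (induction m)
  case 0 then show ?case using assms by simp
next
  case (Suc m)
  have "2 * Suc m = Suc (Suc (2*m))" by simp
  then show ?case using Suc.IH Suc.prems Suc.prems[of "2*m+1"] by (simp add: sum.atLeast0_atMost_Suc sum.cl_ivl_Suc)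
qed

lemma tri_aux:
  fixes X Y :: "nat \<Rightarrow> 'b \<Rightarrow> 'a::real_vector" and A :: "nat \<Rightarrow> nat \<Rightarrow> real"
  assumes XY: "\<And>j n. lo \<le> j \<Longrightarrow> j \<le> M \<Longrightarrow> X j n = (\<Sum>i=lo..j. A j i *\<^sub>R Y i n)"
    and diag: "\<And>j. lo \<le> j \<Longrightarrow> j \<le> M \<Longrightarrow> A j j \<noteq> 0"
  shows "lo \<le> m \<Longrightarrow> m \<le> M \<Longrightarrow> \<exists>c. c m \<noteq> 0 \<and> (\<forall>j>m. c j = 0) \<and> (\<forall>n. Y m n = (\<Sum>j=lo..M. c j *\<^sub>R X j n))"
proof (induction m rule: less_induct)
  case (less m)
  have "\<forall>i\<in>{lo..<m}. \<exists>c. (\<forall>j>i. c j = 0) \<and> (\<forall>n. Y i n = (\<Sum>j=lo..M. c j *\<^sub>R X j n))"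
  proof
    fix i assume i: "i \<in> {lo..<m}"
    then obtain c where "c i \<noteq> 0 \<and> (\<forall>j>i. c j = 0) \<and> (\<forall>n. Y i n = (\<Sum>j=lo..M. c j *\<^sub>R X j n))"
      using less.IH[of i] less.prems by auto
    then show "\<exists>c. (\<forall>j>i. c j = 0) \<and> (\<forall>n. Y i n = (\<Sum>j=lo..M. c j *\<^sub>R X j n))" by blast
  qed
  then obtain C where C: "\<And>i. i \<in> {lo..<m} \<Longrightarrow> (\<forall>j>i. C i j = 0) \<and> (\<forall>n. Y i n = (\<Sum>j=lo..M. C i j *\<^sub>R X j n))"
    by metis
  define a where "a = A m m"
  have a0: "a \<noteq> 0" using diag less.prems by (simp add: a_def)
  define c where "c j = (if j = m then 1/a else 0) - (1/a) * (\<Sum>i=lo..<m. A m i * C i j)" for j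
  have Cz: "C i j = 0" if "i \<in> {lo..<m}" "j \<ge> m" for i j using C[OF that(1)] that by auto
  have cm: "c m = 1/a" unfolding c_def using Cz by simp
  have cj: "\<forall>j>m. c j = 0" unfolding c_def using Cz by simp
  have "Y m n = (\<Sum>j=lo..M. c j *\<^sub>R X j n)" for n
  proof -
    have f1: "(\<Sum>j=lo..M. c j *\<^sub>R X j n) = (\<Sum>j=lo..M. (if j = m then 1/a else 0) *\<^sub>R X j n)
          - (1/a) *\<^sub>R (\<Sum>j=lo..M. (\<Sum>i=lo..<m. A m i * C i j) *\<^sub>R X j n)"
      unfolding c_def by (simp add: scaleR_diff_left sum_subtractf scaleR_sum_right)
    have f2: "(\<Sum>j=lo..M. (if j = m then 1/a else 0) *\<^sub>R X j n) = (1/a) *\<^sub>R X m n"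
      using less.prems by (simp add: if_distrib[of "\<lambda>x. x *\<^sub>R _"] sum.delta cong: if_cong)
    have f3: "(\<Sum>j=lo..M. (\<Sum>i=lo..<m. A m i * C i j) *\<^sub>R X j n) = (\<Sum>i=lo..<m. A m i *\<^sub>R Y i n)"
    proof -
      have "(\<Sum>j=lo..M. (\<Sum>i=lo..<m. A m i * C i j) *\<^sub>R X j n) = (\<Sum>j=lo..M. \<Sum>i=lo..<m. A m i *\<^sub>R (C i j *\<^sub>R X j n))"
        by (simp add: scaleR_sum_left)
      also have "\<dots> = (\<Sum>i=lo..<m. A m i *\<^sub>R (\<Sum>j=lo..M. C i j *\<^sub>R X j n))"
        by (subst sum.swap) (simp add: scaleR_sum_right)
      also have "\<dots> = (\<Sum>i=lo..<m. A m i *\<^sub>R Y i n)"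
        using C by (intro sum.cong refl) auto
      finally show ?thesis .
    qed
    have f4: "X m n = A m m *\<^sub>R Y m n + (\<Sum>i=lo..<m. A m i *\<^sub>R Y i n)"
    proof -
      have "{lo..m} = insert m {lo..<m}" using less.prems by auto
      then show ?thesis using XY[of m n] less.prems by simp
    qed
    show "Y m n = (\<Sum>j=lo..M. c j *\<^sub>R X j n)"
      unfolding f1 f2 f3 f4 using a0 by (simp add: a_def scaleR_add_right)
  qed
  then show ?case using cm cj a0 by (intro exI[of _ c]) auto
qed

lemma tri:
  fixes X Y :: "nat \<Rightarrow> 'b \<Rightarrow> 'a::real_vector" and A :: "nat \<Rightarrow> nat \<Rightarrow> real"
  assumes "\<And>j n. lo \<le> j \<Longrightarrow> j \<le> M \<Longrightarrow> X j n = (\<Sum>i=lo..j. A j i *\<^sub>R Y i n)"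
    and "\<And>j. lo \<le> j \<Longrightarrow> j \<le> M \<Longrightarrow> A j j \<noteq> 0" and "lo \<le> M"
  shows "\<exists>c. c M \<noteq> 0 \<and> (\<forall>n. Y M n = (\<Sum>j=lo..M. c j *\<^sub>R X j n))"
proof -
  have "\<exists>c. c M \<noteq> 0 \<and> (\<forall>j>M. c j = 0) \<and> (\<forall>n. Y M n = (\<Sum>j=lo..M. c j *\<^sub>R X j n))"
    by (rule tri_aux[where X=X and Y=Y and A=A]) (use assms in auto)
  then show ?thesis by blast
qed

lemma real_cplx_hderiv:
  fixes G :: "complex \<Rightarrow> complex" and g :: "real \<Rightarrow> real"
  assumes hol: "G holomorphic_on UNIV" and eq: "\<And>x. G (of_real x) = of_real (g x)"
  shows "(deriv ^^ p) G (of_real x) = of_real ((deriv ^^ p) g x)"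
proof (induction p arbitrary: x)
  case 0
  then show ?case using eq by simp
next
  case (Suc p)
  define H where "H = (deriv ^^ p) G"
  define h where "h = (deriv ^^ p) g"
  have holH: "H holomorphic_on UNIV" unfolding H_def by (rule holomorphic_higher_deriv[OF hol]) auto
  have IH: "\<And>y. H (of_real y) = of_real (h y)" using Suc unfolding H_def h_def by blast
  define D where "D = deriv H (of_real x)"
  have "(H has_field_derivative D) (at (of_real x))" unfolding D_def
    by (rule holomorphic_derivI[OF holH]) auto
  then have "((\<lambda>y. H (of_real y)) has_vector_derivative D) (at x)"
    by (rule has_vector_derivative_real_field)
  then have v: "((\<lambda>y. complex_of_real (h y)) has_vector_derivative D) (at x)"
    using IH by simp
  have r: "(h has_field_derivative Re D) (at x)" using has_field_derivative_Re[OF v] by simp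
  have "((\<lambda>y. 0::real) has_field_derivative Im D) (at x)" using has_field_derivative_Im[OF v] by simp
  then have "Im D = 0" using DERIV_unique DERIV_const by blast
  then have "D = of_real (Re D)" by (simp add: complex_eqI)
  moreover have "deriv h x = Re D" using r by (rule DERIV_imp_deriv)
  ultimately show ?case by (simp add: H_def h_def D_def)
qed


lemma FF_holo: "(\<lambda>t::complex. FF a n t) holomorphic_on UNIV"
  unfolding FF_def by (auto intro!: holomorphic_intros)

lemma FF_real: "FF a n (complex_of_real x) = of_real (FF a n x)"
proof -
  have e1: "of_nat n - complex_of_real x + 1 = of_real (real n - x + 1)" by simp
  have e2: "complex_of_real x + 1 = of_real (x + 1)" by simp
  show ?thesis unfolding FF_def e1 e2 rGamma_complex_of_real by simp
qed

lemma FF_deriv: "(deriv ^^ i) (FF a n) (of_nat k :: complex) = of_real ((deriv ^^ i) (FF a n) (real k))"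
proof -
  have "(deriv ^^ i) (FF a n) (complex_of_real (real k)) = of_real ((deriv ^^ i) (FF a n) (real k))"
    by (rule real_cplx_hderiv) (use FF_holo FF_real in auto)
  then show ?thesis by simp
qed

definition Cc :: "nat \<Rightarrow> real \<Rightarrow> nat \<Rightarrow> complex" where
  "Cc j u m = (deriv ^^ m) (\<lambda>s. PP s^(j+1) * exp (\<i> * of_real pi * s * of_real u)) 0"

lemma Itilde_expand:
  assumes "(u = 0 \<and> odd j) \<or> (u = 1 \<and> even j)"
  shows "Itilde a n j u = (\<Sum>i=0..j. of_real (Fnmu a n i) * Cc j u (j-i) / (fact i * fact (j-i)))"
proof -
  have r: "residue (\<lambda>t. FF a n t * (of_real pi / sin (of_real pi * t))^(j+1) * exp (\<i> * of_real pi * t * of_real u)) (of_nat k)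
     = (\<Sum>i=0..j. of_real ((deriv ^^ i) (FF a n) (real k)) * Cc j u (j-i) / (fact i * fact (j-i)))" for k
  proof -
    have Esh: "exp (\<i> * of_real pi * (of_nat k + x) * of_real u) = ((-1)^k)^(j+1) * exp (\<i> * of_real pi * x * of_real u)" for x
    proof -
      have p: "((-1::complex)^k)^(j+1) = ((-1)^(j+1))^k" by (simp only: power_mult[symmetric] mult.commute)
      show ?thesis using assms
      proof
        assume "u = 0 \<and> odd j" then show ?thesis unfolding p by simp
      next
        assume h: "u = 1 \<and> even j"
        then have "((-1::complex)^(j+1))^k = (-1)^k" by simp
        then show ?thesis using h exp_shift[of k x] unfolding p by simp
      qed
    qed
    have "residue (\<lambda>t. FF a n t * (of_real pi / sin (of_real pi * t))^(j+1) * exp (\<i> * of_real pi * t * of_real u)) (of_nat k)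
      = (\<Sum>i=0..j. (deriv ^^ i) (FF a n) (of_nat k) * (deriv ^^ (j-i)) (\<lambda>s. PP s^(j+1) * exp (\<i> * of_real pi * s * of_real u)) 0 / (fact i * fact (j-i)))"
      by (rule res_formula[OF FF_holo]) (auto intro!: holomorphic_intros simp: Esh)
    then show ?thesis by (simp add: FF_deriv Cc_def)
  qed
  have "Itilde a n j u = (\<Sum>k=0..n. \<Sum>i=0..j. of_real ((deriv ^^ i) (FF a n) (real k)) * Cc j u (j-i) / (fact i * fact (j-i)))"
    unfolding Itilde_def r ..
  also have "\<dots> = (\<Sum>i=0..j. \<Sum>k=0..n. of_real ((deriv ^^ i) (FF a n) (real k)) * Cc j u (j-i) / (fact i * fact (j-i)))"
    by (rule sum.swap)
  also have "\<dots> = (\<Sum>i=0..j. of_real (Fnmu a n i) * Cc j u (j-i) / (fact i * fact (j-i)))"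
    unfolding Fnmu_def by (simp add: sum_distrib_right sum_divide_distrib)
  finally show ?thesis .
qed

lemma Cc0_eq: "Cc j 0 m = (deriv ^^ m) (\<lambda>s. PP s^(j+1)) 0"
  unfolding Cc_def by simp

lemma Cc0_real: "Cc j 0 m = of_real (Re (Cc j 0 m))"
  unfolding Cc0_eq
  by (rule real_hderiv0) (auto intro!: holomorphic_intros PP_holo simp: PP_cnj)

lemma Cc0_odd: "odd m \<Longrightarrow> Cc j 0 m = 0"
  unfolding Cc0_eq
  by (rule even_hderiv) (auto intro!: holomorphic_intros PP_holo simp: PP_even)

lemma Cc0_0: "Cc j 0 0 = 1"
  unfolding Cc0_eq by (simp add: PP_0)

definition VV :: "nat \<Rightarrow> complex \<Rightarrow> complex" where
  "VV j s = PP s^(j+1) * cos (of_real pi * s)"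
definition UU :: "nat \<Rightarrow> complex \<Rightarrow> complex" where
  "UU j s = PP s^(j+1) * sin (of_real pi * s)"

lemma VV_holo: "VV j holomorphic_on ball 0 1"
  unfolding VV_def by (auto intro!: holomorphic_intros PP_holo)
lemma UU_holo: "UU j holomorphic_on ball 0 1"
  unfolding UU_def by (auto intro!: holomorphic_intros PP_holo)

lemma Cc1_split: "Cc j 1 m = (deriv ^^ m) (VV j) 0 + \<i> * (deriv ^^ m) (UU j) 0"
proof -
  have "(\<lambda>s. PP s^(j+1) * exp (\<i> * of_real pi * s * of_real 1)) = (\<lambda>s. VV j s + \<i> * UU j s)"
  proof
    fix s
    have "exp (\<i> * of_real pi * s * of_real 1) = cos (of_real pi * s) + \<i> * sin (of_real pi * s)"
      using exp_Euler[of "of_real pi * s"] by (simp add: mult.assoc)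
    then show "PP s^(j+1) * exp (\<i> * of_real pi * s * of_real 1) = VV j s + \<i> * UU j s"
      unfolding VV_def UU_def by (simp add: algebra_simps)
  qed
  then have "Cc j 1 m = (deriv ^^ m) (\<lambda>s. VV j s + \<i> * UU j s) 0"
    unfolding Cc_def by metis
  also have "\<dots> = (deriv ^^ m) (VV j) 0 + (deriv ^^ m) (\<lambda>s. \<i> * UU j s) 0"
    by (rule higher_deriv_add[of _ "ball 0 1"]) (auto intro!: holomorphic_intros VV_holo UU_holo)
  also have "(deriv ^^ m) (\<lambda>s. \<i> * UU j s) 0 = \<i> * (deriv ^^ m) (UU j) 0"
    by (rule higher_deriv_cmult[of _ "ball 0 1"]) (auto intro: UU_holo)
  finally show ?thesis .
qed

lemma VV_real: "(deriv ^^ m) (VV j) 0 = of_real (Re ((deriv ^^ m) (VV j) 0))"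
  by (rule real_hderiv0[OF VV_holo]) (auto simp: VV_def PP_cnj cnj_cos)
lemma UU_real: "(deriv ^^ m) (UU j) 0 = of_real (Re ((deriv ^^ m) (UU j) 0))"
  by (rule real_hderiv0[OF UU_holo]) (auto simp: UU_def PP_cnj cnj_sin)

lemma Cc1_Re: "Re (Cc j 1 m) = Re ((deriv ^^ m) (VV j) 0)"
proof -
  obtain r where "(deriv ^^ m) (UU j) 0 = of_real r" using UU_real by blast
  then show ?thesis unfolding Cc1_split by simp
qed

lemma VV_odd: "odd m \<Longrightarrow> (deriv ^^ m) (VV j) 0 = 0"
  by (rule even_hderiv[OF VV_holo]) (auto simp: VV_def PP_even)

lemma VV_0: "(deriv ^^ 0) (VV j) 0 = 1"
  by (simp add: VV_def PP_0)

lemma PP_deriv_nz: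
  assumes s: "s \<in> ball 0 1" "s \<noteq> 0"
  shows "deriv PP s = (of_real pi * sin (of_real pi * s) - of_real pi * s * (of_real pi * cos (of_real pi * s))) / (sin (of_real pi * s))^2"
proof -
  have sx: "sin (of_real pi * s) \<noteq> 0" using sin_pi_nz s by auto
  have "((\<lambda>s. of_real pi * s / sin (of_real pi * s)) has_field_derivative
        (of_real pi * sin (of_real pi * s) - of_real pi * s * (of_real pi * cos (of_real pi * s))) / (sin (of_real pi * s))^2) (at s)"
    using sx by (auto intro!: derivative_eq_intros simp: power2_eq_square)
  then have "(PP has_field_derivative
        (of_real pi * sin (of_real pi * s) - of_real pi * s * (of_real pi * cos (of_real pi * s))) / (sin (of_real pi * s))^2) (at s)"
    by (rule has_field_derivative_transform_within_open[of _ _ _ "ball 0 1 - {0}"]) (use s in \<open>auto simp: PP_eq\<close>)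
  then show ?thesis by (rule DERIV_imp_deriv)
qed

lemma PP_deriv_0: "deriv PP 0 = 0"
  using even_hderiv[OF PP_holo, of 1] by (simp add: PP_even)

lemma PP_key:
  assumes s: "s \<in> ball 0 1"
  shows "PP s^2 * cos (of_real pi * s) = PP s - s * deriv PP s"
proof (cases "s = 0")
  case True then show ?thesis by (simp add: PP_0 PP_deriv_0)
next
  case False
  have sx: "sin (of_real pi * s) \<noteq> 0" using sin_pi_nz s False by auto
  show ?thesis using sx False unfolding PP_deriv_nz[OF s False] PP_eq[OF False]
    by (simp add: field_simps power2_eq_square)
qed

lemma VV_top:
  assumes j: "j \<ge> 1"
  shows "(deriv ^^ j) (VV j) 0 = 0"
proof -
  define T where "T = (\<lambda>s. PP s^j)"
  have holT: "T holomorphic_on ball 0 1" unfolding T_def by (auto intro!: holomorphic_intros PP_holo)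
  have holdT: "deriv T holomorphic_on ball 0 1" by (rule holomorphic_deriv[OF holT]) auto
  have dT: "deriv T s = of_nat j * PP s^(j-1) * deriv PP s" if s: "s \<in> ball 0 1" for s
  proof -
    have "(PP has_field_derivative deriv PP s) (at s)" by (rule holomorphic_derivI[OF PP_holo]) (use s in auto)
    then have "(T has_field_derivative of_nat j * PP s^(j-1) * deriv PP s) (at s)"
      unfolding T_def by (auto intro!: derivative_eq_intros)
    then show ?thesis by (rule DERIV_imp_deriv)
  qed
  have eq: "VV j s = T s - (1 / of_nat j) * (s * deriv T s)" if s: "s \<in> ball 0 1" for s
  proof -
    have "T s - (1 / of_nat j) * (s * deriv T s) = PP s^(j-1) * (PP s - s * deriv PP s)"
    proof -
      have jn: "(of_nat j :: complex) \<noteq> 0" using j by simp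
      have pj: "PP s ^ j = PP s^(j-1) * PP s" using power_minus_mult[of j "PP s"] j by simp
      show ?thesis unfolding dT[OF s] unfolding T_def pj using jn by (simp add: field_simps)
    qed
    also have "\<dots> = PP s^(j-1) * (PP s^2 * cos (of_real pi * s))" by (simp add: PP_key[OF s])
    also have "\<dots> = VV j s" unfolding VV_def using j
      by (cases j) (auto simp: power2_eq_square)
    finally show ?thesis by simp
  qed
  have "(deriv ^^ j) (VV j) 0 = (deriv ^^ j) (\<lambda>s. T s - (1 / of_nat j) * (s * deriv T s)) 0"
    by (rule higher_deriv_transform_within_open[of _ "ball 0 1"])
       (auto intro!: holomorphic_intros VV_holo holT holdT simp: eq)
  also have "\<dots> = (deriv ^^ j) T 0 - (deriv ^^ j) (\<lambda>s. (1 / of_nat j) * (s * deriv T s)) 0"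
    by (rule higher_deriv_diff[of _ "ball 0 1"]) (auto intro!: holomorphic_intros holT holdT)
  also have "(deriv ^^ j) (\<lambda>s. (1 / of_nat j) * (s * deriv T s)) 0 = (1 / of_nat j) * (deriv ^^ j) (\<lambda>s. s * deriv T s) 0"
    by (rule higher_deriv_cmult[of _ "ball 0 1"]) (auto intro!: holomorphic_intros holdT)
  also have "(deriv ^^ j) (\<lambda>s. s * deriv T s) 0 = (\<Sum>i = 0..j. of_nat (j choose i) * (deriv ^^ i) (\<lambda>s. s) 0 * (deriv ^^ (j-i)) (deriv T) 0)"
    by (rule higher_deriv_mult[of _ "ball 0 1"]) (auto intro!: holomorphic_intros holdT)
  also have "\<dots> = (\<Sum>i = 0..j. if i = 1 then of_nat j * (deriv ^^ (j-1)) (deriv T) 0 else 0)"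
    by (intro sum.cong refl) auto
  also have "\<dots> = of_nat j * (deriv ^^ (j-1)) (deriv T) 0" using j by simp
  also have "(deriv ^^ (j-1)) (deriv T) = (deriv ^^ j) T"
  proof -
    have "(deriv ^^ (j-1)) (deriv T) = (deriv ^^ Suc (j-1)) T" by (simp only: funpow_Suc_right o_apply)
    then show ?thesis using j by simp
  qed
  finally show ?thesis using j by simp
qed

lemma UU_0: "(deriv ^^ 0) (UU j) 0 = 0" by (simp add: UU_def)

lemma Cc1_00: "Cc 0 1 0 = 1"
  using Cc1_split[of 0 0] VV_0[of 0] UU_0[of 0] by simp

lemma fact_cplx: "(fact i * fact k :: complex) = of_real (fact i * fact k)"
  by simp

lemma Re_helper: "Re (complex_of_real x * z / (fact i * fact k)) = x * Re z / (fact i * fact k)"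
proof -
  have e: "(fact i * fact k :: complex) = complex_of_real (fact i * fact k)" by simp
  show ?thesis by (simp only: e Re_divide_of_real) simp
qed

lemma odd_case:
  assumes "\<mu> = 2*M+1"
  shows "\<exists>c :: nat \<Rightarrow> real. c \<mu> \<noteq> 0 \<and> (\<forall>n. complex_of_real (Fnmu a n \<mu>) =
           (\<Sum>j=0..\<mu> div 2. complex_of_real (c (2*j+1)) * Itilde a n (2*j+1) 0))"
proof -
  define X where "X j n = Itilde a n (2*j+1) 0" for j n
  define Y where "Y i n = complex_of_real (Fnmu a n (2*i+1))" for i n
  define A where "A j i = Re (Cc (2*j+1) 0 (2*j-2*i)) / (fact (2*i+1) * fact (2*j-2*i))" for j i
  have XY: "X j n = (\<Sum>i=0..j. A j i *\<^sub>R Y i n)" for j n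
  proof -
    have "X j n = (\<Sum>i=0..2*j+1. of_real (Fnmu a n i) * Cc (2*j+1) 0 (2*j+1-i) / (fact i * fact (2*j+1-i)))"
      unfolding X_def by (rule Itilde_expand) simp
    also have "\<dots> = (\<Sum>i=0..j. of_real (Fnmu a n (2*i+1)) * Cc (2*j+1) 0 (2*j+1-(2*i+1)) / (fact (2*i+1) * fact (2*j+1-(2*i+1))))"
    proof (rule sum_odd_part)
      fix i :: nat assume "even i" "i \<le> 2*j+1"
      then show "of_real (Fnmu a n i) * Cc (2*j+1) 0 (2*j+1-i) / (fact i * fact (2*j+1-i)) = 0"
        by (auto simp: Cc0_odd)
    qed
    also have "\<dots> = (\<Sum>i=0..j. A j i *\<^sub>R Y i n)"
    proof (rule sum.cong[OF refl])
      fix i assume "i \<in> {0..j}"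
      then have e: "2*j+1-(2*i+1) = 2*j-2*i" by simp
      show "of_real (Fnmu a n (2*i+1)) * Cc (2*j+1) 0 (2*j+1-(2*i+1)) / (fact (2*i+1) * fact (2*j+1-(2*i+1))) = A j i *\<^sub>R Y i n"
        unfolding e A_def Y_def scaleR_conv_of_real fact_cplx
        by (subst Cc0_real) (simp add: field_simps)
    qed
    finally show ?thesis .
  qed
  have diag: "A j j \<noteq> 0" for j unfolding A_def by (simp add: Cc0_0)
  obtain c where c: "c M \<noteq> 0" "\<forall>n. Y M n = (\<Sum>j=0..M. c j *\<^sub>R X j n)"
    using tri[of 0 M X A Y] XY diag by auto
  show ?thesis
  proof (intro exI[of _ "\<lambda>i. c (i div 2)"] conjI allI)
    show "c (\<mu> div 2) \<noteq> 0" using c assms by simp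
    fix n
    have "\<mu> div 2 = M" using assms by simp
    then show "complex_of_real (Fnmu a n \<mu>) = (\<Sum>j=0..\<mu> div 2. complex_of_real (c ((2*j+1) div 2)) * Itilde a n (2*j+1) 0)"
      using c(2) assms unfolding X_def Y_def by (simp add: scaleR_conv_of_real)
  qed
qed

lemma even_case:
  assumes "\<mu> = 2*M" "M \<ge> 1"
  shows "\<exists>c :: nat \<Rightarrow> real. c \<mu> \<noteq> 0 \<and> (\<forall>n. Fnmu a n \<mu> =
           (\<Sum>j=1..\<mu> div 2. c (2*j) * Re (Itilde a n (2*j) 1)))"
proof -
  define X where "X j n = Re (Itilde a n (2*j) 1)" for j n
  define Y where "Y i n = Fnmu a n (2*i)" for i n
  define A where "A j i = Re (Cc (2*j) 1 (2*j-2*i)) / (fact (2*i) * fact (2*j-2*i))" for j i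
  have XY: "X j n = (\<Sum>i=1..j. A j i *\<^sub>R Y i n)" if j: "1 \<le> j" for j n
  proof -
    have "X j n = Re (\<Sum>i=0..2*j. of_real (Fnmu a n i) * Cc (2*j) 1 (2*j-i) / (fact i * fact (2*j-i)))"
      unfolding X_def by (subst Itilde_expand) simp_all
    also have "\<dots> = (\<Sum>i=0..2*j. Fnmu a n i * Re (Cc (2*j) 1 (2*j-i)) / (fact i * fact (2*j-i)))"
      unfolding Re_sum by (intro sum.cong refl) (rule Re_helper)
    also have "\<dots> = (\<Sum>i=1..j. Fnmu a n (2*i) * Re (Cc (2*j) 1 (2*j-2*i)) / (fact (2*i) * fact (2*j-2*i)))"
    proof (rule sum_even_part)
      fix i :: nat assume "odd i" "i \<le> 2*j"
      then show "Fnmu a n i * Re (Cc (2*j) 1 (2*j-i)) / (fact i * fact (2*j-i)) = 0"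
        by (auto simp: Cc1_Re VV_odd)
    next
      show "Fnmu a n 0 * Re (Cc (2*j) 1 (2*j-0)) / (fact 0 * fact (2*j-0)) = 0"
        using VV_top[of "2*j"] j by (simp add: Cc1_Re)
    qed
    also have "\<dots> = (\<Sum>i=1..j. A j i *\<^sub>R Y i n)"
      unfolding A_def Y_def by (intro sum.cong refl) simp
    finally show ?thesis .
  qed
  have diag: "A j j \<noteq> 0" for j unfolding A_def using VV_0[of "2*j"] by (simp add: Cc1_Re)
  obtain c where c: "c M \<noteq> 0" "\<forall>n. Y M n = (\<Sum>j=1..M. c j *\<^sub>R X j n)"
    using tri[of 1 M X A Y] XY diag assms(2) by auto
  show ?thesis
  proof (intro exI[of _ "\<lambda>i. c (i div 2)"] conjI allI)
    show "c (\<mu> div 2) \<noteq> 0" using c assms by simp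
    fix n
    have "\<mu> div 2 = M" using assms by simp
    then show "Fnmu a n \<mu> = (\<Sum>j=1..\<mu> div 2. c ((2*j) div 2) * Re (Itilde a n (2*j) 1))"
      using c(2) assms unfolding X_def Y_def by simp
  qed
qed

theorem lemma4:
  fixes a \<mu> :: nat
  assumes "a \<ge> 2" and "\<mu> \<le> a - 1"
  shows "\<exists>c :: nat \<Rightarrow> real. c \<mu> \<noteq> 0 \<and>
    (\<forall>n::nat.
       (\<mu> = 0 \<longrightarrow> complex_of_real (Fnmu a n \<mu>) = Itilde a n 0 1) \<and>
       (odd \<mu> \<longrightarrow> complex_of_real (Fnmu a n \<mu>) =
           (\<Sum>j=0..\<mu> div 2. complex_of_real (c (2*j+1)) * Itilde a n (2*j+1) 0)) \<and>
       (even \<mu> \<and> \<mu> \<ge> 2 \<longrightarrow> Fnmu a n \<mu> =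
           (\<Sum>j=1..\<mu> div 2. c (2*j) * Re (Itilde a n (2*j) 1))))"
proof (cases "\<mu> = 0")
  case True
  have "Itilde a n 0 1 = complex_of_real (Fnmu a n 0)" for n
    by (subst Itilde_expand) (simp_all add: Cc1_00)
  then show ?thesis using True by (intro exI[of _ "\<lambda>_. 1"]) auto
next
  case False
  show ?thesis
  proof (cases "odd \<mu>")
    case True
    then obtain M where M: "\<mu> = 2*M+1" by (metis oddE)
    obtain c where c: "c \<mu> \<noteq> 0" "\<forall>n. complex_of_real (Fnmu a n \<mu>) =
           (\<Sum>j=0..\<mu> div 2. complex_of_real (c (2*j+1)) * Itilde a n (2*j+1) 0)"
      using odd_case[OF M] by blast
    then show ?thesis using True False by (intro exI[of _ c]) auto
  next
    case ev: False
    then obtain M where M: "\<mu> = 2*M" by (metis evenE)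
    with False have M1: "M \<ge> 1" by simp
    obtain c where c: "c \<mu> \<noteq> 0" "\<forall>n. Fnmu a n \<mu> =
           (\<Sum>j=1..\<mu> div 2. c (2*j) * Re (Itilde a n (2*j) 1))"
      using even_case[OF M M1] by blast
    then show ?thesis using ev False by (intro exI[of _ c]) auto
  qed
qed

end
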